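(* Let $X$ be a compact metric space, $f:X\to X$ continuous, $x\in X$, and suppose $L=\omega_f(x)$ is totally periodic. Let $Y=\overline{O_f(x)}=O_f(x)\cup L$, for $z\in Y$ let $[z]$ be the connected component of $Y$ containing $z$, let $Y/\mathcal{C}$ be the quotient space obtained by collapsing each connected component of $Y$ to a point, $\pi:Y\to Y/\mathcal{C}$, $\pi(y)=[y]$, the quotient map, and $\tilde f:Y/\mathcal{C}\to Y/\mathcal{C}$, $\tilde f([y])=[f(y)]$, the induced (well-defined, continuous) map. Then: (1) for every $n\in\mathbb{Z}_+$, $[f^n(x)]=\{f^n(x)\}$ and $[f^n(x)]$ is an isolated point of $Y/\mathcal{C}$; (2) if $y\in L$ then $[y]\subset L$; (3) for every $y\in Y$, $f([y])=[f(y)]$, and $f^n([y])=[f^n(y)]$ for all $n\in\mathbb{Z}_+$; (4) for every $z\in L$, $[z]$ is a periodic point of $\tilde f$; (5) if $L$ is infinite, then $\{[y]:\ y\in L\}=\omega_{\tilde f}([x])$.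
   Context: $O_f(x)=\{f^n(x):n\in\mathbb{Z}_+\}$ is the orbit of $x$. $\omega_f(x)=\{y:\ \exists\, n_i\to+\infty,\ f^{n_i}(x)\to y\}$, and it is totally periodic if each of its points $y$ satisfies $f^m(y)=y$ for some $m\ge1$. *)

theory Defs
  imports "HOL-Analysis.Analysis"
begin

definition orbit :: "('a \<Rightarrow> 'a) \<Rightarrow> 'a \<Rightarrow> 'a set" where
  "orbit f x = {(f ^^ n) x | n. True}"

definition omega_limit :: "'a topology \<Rightarrow> ('a \<Rightarrow> 'a) \<Rightarrow> 'a \<Rightarrow> 'a set" where
  "omega_limit T g p = {q. \<exists>r::nat \<Rightarrow> nat. filterlim r at_top sequentially \<and>
                                limitin T (\<lambda>i. (g ^^ (r i)) p) q sequentially}"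

definition totally_periodic :: "('a \<Rightarrow> 'a) \<Rightarrow> 'a set \<Rightarrow> bool" where
  "totally_periodic f L \<longleftrightarrow> (\<forall>y\<in>L. \<exists>m\<ge>1. (f ^^ m) y = y)"

definition quotient_top :: "'a::topological_space set \<Rightarrow> ('a \<Rightarrow> 'b) \<Rightarrow> 'b topology" where
  "quotient_top Y q = topology (\<lambda>U. U \<subseteq> q ` Y \<and> openin (top_of_set Y) {y\<in>Y. q y \<in> U})"

lemma istopology_quotient_top:
  "istopology (\<lambda>U. U \<subseteq> q ` Y \<and> openin (top_of_set Y) {y\<in>Y. q y \<in> U})"
proof -
  have 1: "S \<inter> T \<subseteq> q ` Y \<and> openin (top_of_set Y) {y \<in> Y. q y \<in> S \<inter> T}"
    if S: "S \<subseteq> q ` Y \<and> openin (top_of_set Y) {y \<in> Y. q y \<in> S}"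
    and T: "T \<subseteq> q ` Y \<and> openin (top_of_set Y) {y \<in> Y. q y \<in> T}" for S T
  proof -
    have "{y \<in> Y. q y \<in> S \<inter> T} = {y \<in> Y. q y \<in> S} \<inter> {y \<in> Y. q y \<in> T}" by blast
    then show ?thesis using S T openin_Int[of "top_of_set Y" "{y \<in> Y. q y \<in> S}" "{y \<in> Y. q y \<in> T}"] by auto
  qed
  have 2: "\<Union>K \<subseteq> q ` Y \<and> openin (top_of_set Y) {y \<in> Y. q y \<in> \<Union>K}"
    if K: "\<forall>U\<in>K. U \<subseteq> q ` Y \<and> openin (top_of_set Y) {y \<in> Y. q y \<in> U}" for K
  proof -
    have "{y \<in> Y. q y \<in> \<Union>K} = \<Union>((\<lambda>U. {y \<in> Y. q y \<in> U}) ` K)" by blast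
    then show ?thesis using K openin_Union[of "(\<lambda>U. {y \<in> Y. q y \<in> U}) ` K" "top_of_set Y"] by auto
  qed
  show ?thesis unfolding istopology_def using 1 2 by blast
qed

abbreviation comp :: "'a::topological_space set \<Rightarrow> 'a \<Rightarrow> 'a set" where
  "comp Y z \<equiv> connected_component_set Y z"

text \<open>Induced map on components: [y] maps to [f y] (for any representative y).\<close>
definition induced_map :: "'a::topological_space set \<Rightarrow> ('a \<Rightarrow> 'a) \<Rightarrow> 'a set \<Rightarrow> 'a set" where
  "induced_map Y f C = comp Y (f (SOME y. y \<in> C))"

end

theory Submission
  imports Defs
begin

locale dsetting =
  fixes X :: "'a::metric_space set" and f :: "'a \<Rightarrow> 'a" and x :: 'a and L Y :: "'a set"
  assumes cX: "compact X" and cf: "continuous_on X f" and fX: "f ` X \<subseteq> X" and xX: "x \<in> X"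
    and L_def: "L = omega_limit (top_of_set X) f x"
    and tp: "totally_periodic f L"
    and Y_def: "Y = closure (orbit f x)"
begin

lemma orb_X: "(f ^^ n) x \<in> X"
proof (induction n)
  case 0 then show ?case using xX by simp
next
  case (Suc n) then show ?case using fX by (simp add: image_subset_iff)
qed

lemma orbit_X: "orbit f x \<subseteq> X"
  unfolding orbit_def using orb_X by auto

lemma closedX: "closed X" using cX compact_imp_closed by blast

lemma Y_X: "Y \<subseteq> X"
  unfolding Y_def by (rule closure_minimal[OF orbit_X closedX])

lemma orb_Y: "(f ^^ n) x \<in> Y"
proof -
  have "(f ^^ n) x \<in> orbit f x" unfolding orbit_def by blast
  then show ?thesis unfolding Y_def using closure_subset by blast
qed

lemma closedY: "closed Y" unfolding Y_def by simp

lemma L_iff: "q \<in> L \<longleftrightarrow> (\<exists>r::nat\<Rightarrow>nat. filterlim r at_top sequentially \<and> q \<in> X \<and>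
    (\<lambda>i. (f ^^ r i) x) \<longlonglongrightarrow> q)"
  unfolding L_def omega_limit_def using orb_X
  by (auto simp: limitin_subtopology limitin_canonical_iff)

lemma L_Y: "L \<subseteq> Y"
proof
  fix q assume "q \<in> L"
  then obtain r where "(\<lambda>i. (f ^^ r i) x) \<longlonglongrightarrow> q" using L_iff by blast
  then show "q \<in> Y" unfolding Y_def closure_sequential orbit_def
    by (intro exI[of _ "\<lambda>i. (f^^r i) x"]) auto
qed

lemma lemA:
  assumes pX: "p \<in> X" and H: "\<And>N e. e > 0 \<Longrightarrow> \<exists>k\<ge>N. dist ((f ^^ k) x) p < e"
  shows "p \<in> L"
proof -
  define r where "r N = (SOME k. k \<ge> N \<and> dist ((f ^^ k) x) p < inverse (real N + 1))" for N
  have r: "r N \<ge> N \<and> dist ((f ^^ r N) x) p < inverse (real N + 1)" for N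
    unfolding r_def by (rule someI_ex) (rule H, simp)
  have "filterlim r at_top sequentially"
    unfolding filterlim_at_top
    by (metis (mono_tags, lifting) eventually_at_top_linorder order_trans r)
  moreover have "(\<lambda>i. (f ^^ r i) x) \<longlonglongrightarrow> p"
    unfolding lim_sequentially
  proof (intro allI impI)
    fix e :: real assume "e > 0"
    then obtain n where n: "n > 0" "inverse (real n) < e" using ex_inverse_of_nat_less by blast
    have "dist ((f ^^ r m) x) p < e" if "m \<ge> n" for m
    proof -
      have "inverse (real m + 1) \<le> inverse (real n)" using that n by (simp add: field_simps)
      then show ?thesis using r[of m] n by linarith
    qed
    then show "\<exists>no. \<forall>n\<ge>no. dist ((f ^^ r n) x) p < e" by blast
  qed
  ultimately show ?thesis using L_iff pX by blast
qed

lemma lemB: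
  assumes pX: "p \<in> X" and pL: "p \<notin> L"
  shows "\<exists>e>0. ball p e \<inter> orbit f x \<subseteq> {p}"
proof -
  obtain N e0 where e0: "e0 > 0" "\<forall>k\<ge>N. \<not> dist ((f ^^ k) x) p < e0"
    using lemA[OF pX] pL by blast
  obtain d where d: "d > 0" "\<forall>z\<in>(\<lambda>k. (f ^^ k) x) ` {..<N}. z \<noteq> p \<longrightarrow> d \<le> dist p z"
    using finite_set_avoid[of "(\<lambda>k. (f ^^ k) x) ` {..<N}" p] by blast
  have "ball p (min e0 d) \<inter> orbit f x \<subseteq> {p}"
  proof
    fix z assume z: "z \<in> ball p (min e0 d) \<inter> orbit f x"
    then obtain k where k: "z = (f ^^ k) x" unfolding orbit_def by blast
    show "z \<in> {p}"
    proof (cases "k < N")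
      case True
      then show ?thesis using d z k by (auto simp: dist_commute)
    next
      case False
      then show ?thesis using e0 z k by (auto simp: dist_commute)
    qed
  qed
  then show ?thesis using e0 d by (intro exI[of _ "min e0 d"]) auto
qed

lemma lemC:
  assumes pY: "p \<in> Y" and pL: "p \<notin> L"
  shows "openin (top_of_set Y) {p}" and "p \<in> orbit f x"
proof -
  obtain e where e: "e > 0" "ball p e \<inter> orbit f x \<subseteq> {p}"
    using lemB pL pY Y_X by blast
  have "ball p e \<inter> Y \<subseteq> closure (ball p e \<inter> orbit f x)"
    unfolding Y_def by (rule open_Int_closure_subset) simp
  also have "\<dots> \<subseteq> closure {p}" using e by (intro closure_mono)
  finally have 1: "ball p e \<inter> Y \<subseteq> {p}" by simp
  have "{p} = Y \<inter> ball p e" using 1 pY e by auto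
  then show "openin (top_of_set Y) {p}" by (metis open_ball openin_open_Int)
  have "ball p e \<inter> orbit f x \<noteq> {}"
  proof -
    have "p \<in> ball p e \<inter> closure (orbit f x)" using pY e unfolding Y_def by simp
    then show ?thesis using open_Int_closure_eq_empty[of "ball p e" "orbit f x"] by (metis open_ball empty_iff)
  qed
  then show "p \<in> orbit f x" using e by auto
qed

lemma lemD:
  assumes pY: "p \<in> Y" and op: "openin (top_of_set Y) {p}"
  shows "comp Y p = {p}"
proof -
  let ?C = "comp Y p"
  have pC: "p \<in> ?C" using pY by simp
  have CY: "?C \<subseteq> Y" by (rule connected_component_subset)
  have "openin (top_of_set ?C) {p}" using openin_subset_trans[OF op _ CY] pC by simp
  moreover have "closedin (top_of_set Y) {p}" using pY by (intro closed_subset) auto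
  then have "closedin (top_of_set ?C) {p}" using closedin_subset_trans[OF _ _ CY] pC by simp
  ultimately have "{p} = {} \<or> {p} = ?C"
    using connected_connected_component[of Y p] unfolding connected_clopen by blast
  then show ?thesis by auto
qed

lemma lemE:
  assumes "finite Y" "p \<in> Y"
  shows "openin (top_of_set Y) {p}"
proof -
  have "closed (Y - {p})" using assms finite_imp_closed by blast
  then have "open (- (Y - {p}))" by (rule open_Compl)
  moreover have "{p} = Y \<inter> (- (Y - {p}))" using assms by auto
  ultimately show ?thesis unfolding openin_open by blast
qed

lemma orbit_fin:
  assumes ab: "(f ^^ a) x = (f ^^ b) x" "a < b"
  shows "finite (orbit f x)"
proof -
  have "\<exists>j<b. (f ^^ k) x = (f ^^ j) x" for k
  proof (induction k rule: less_induct)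
    case (less k)
    show ?case
    proof (cases "k < b")
      case True then show ?thesis by blast
    next
      case False
      have "(f ^^ k) x = (f ^^ (k - b)) ((f ^^ b) x)"
      proof -
        have "k = (k - b) + b" using False by simp
        then show ?thesis by (metis funpow_add o_apply)
      qed
      also have "\<dots> = (f ^^ (k - b)) ((f ^^ a) x)" using ab by simp
      also have "\<dots> = (f ^^ (k - b + a)) x" by (simp add: funpow_add)
      finally have e: "(f ^^ k) x = (f ^^ (k - b + a)) x" .
      have "k - b + a < k" using False ab by linarith
      then show ?thesis using less e by metis
    qed
  qed
  then have "orbit f x \<subseteq> (\<lambda>j. (f ^^ j) x) ` {..<b}" unfolding orbit_def by blast
  then show ?thesis by (rule finite_subset) simp
qed

lemma Y_fin: "finite (orbit f x) \<Longrightarrow> finite Y"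
  unfolding Y_def by (simp add: closure_closed finite_imp_closed)

lemma per_mult: "(f ^^ k) z = z \<Longrightarrow> (f ^^ (k * j)) z = z"
proof (induction j)
  case 0 then show ?case by simp
next
  case (Suc j)
  have "(f ^^ (k * Suc j)) z = (f ^^ k) ((f ^^ (k * j)) z)"
    by (simp add: funpow_add)
  then show ?case using Suc by simp
qed

lemma iso_orb: "openin (top_of_set Y) {(f ^^ n) x}"
proof (cases "(f ^^ n) x \<in> L")
  case False then show ?thesis using lemC(1) orb_Y by blast
next
  case True
  then obtain m where m: "m \<ge> 1" "(f ^^ m) ((f ^^ n) x) = (f ^^ n) x"
    using tp unfolding totally_periodic_def by blast
  then have "(f ^^ n) x = (f ^^ (m + n)) x" by (simp add: funpow_add)
  then have "finite (orbit f x)" using orbit_fin[of n "m+n"] m by simp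
  then show ?thesis using lemE Y_fin orb_Y by blast
qed

lemma comp_orb: "comp Y ((f ^^ n) x) = {(f ^^ n) x}"
  using lemD[OF orb_Y iso_orb] .

lemma qopen: "openin (quotient_top Y (comp Y)) U \<longleftrightarrow>
   U \<subseteq> comp Y ` Y \<and> openin (top_of_set Y) {y\<in>Y. comp Y y \<in> U}"
  unfolding quotient_top_def topology_inverse'[OF istopology_quotient_top] by simp

lemma qtop: "topspace (quotient_top Y (comp Y)) = comp Y ` Y"
proof
  show "topspace (quotient_top Y (comp Y)) \<subseteq> comp Y ` Y"
    unfolding topspace_def using qopen by blast
  have "{y\<in>Y. comp Y y \<in> comp Y ` Y} = Y" by blast
  then have "openin (quotient_top Y (comp Y)) (comp Y ` Y)" unfolding qopen by simp
  then show "comp Y ` Y \<subseteq> topspace (quotient_top Y (comp Y))"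
    by (rule openin_subset)
qed

lemma qcont: "continuous_map (top_of_set Y) (quotient_top Y (comp Y)) (comp Y)"
  unfolding continuous_map_def qtop using qopen by auto

lemma qiso:
  assumes "p \<in> Y" "openin (top_of_set Y) {p}" "comp Y p = {p}"
  shows "openin (quotient_top Y (comp Y)) {comp Y p}"
proof -
  have "{y\<in>Y. comp Y y \<in> {comp Y p}} = {p}"
  proof
    show "{y \<in> Y. comp Y y \<in> {comp Y p}} \<subseteq> {p}"
    proof
      fix y assume "y \<in> {y \<in> Y. comp Y y \<in> {comp Y p}}"
      then have "y \<in> Y" "comp Y y = {p}" using assms by auto
      moreover have "y \<in> comp Y y" using \<open>y \<in> Y\<close> by simp
      ultimately show "y \<in> {p}" by simp
    qed
  qed (use assms in auto)
  then show ?thesis unfolding qopen using assms by auto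
qed

lemma part2: "y \<in> L \<Longrightarrow> comp Y y \<subseteq> L"
proof
  fix z assume yL: "y \<in> L" and z: "z \<in> comp Y y"
  show "z \<in> L"
  proof (rule ccontr)
    assume zL: "z \<notin> L"
    have zY: "z \<in> Y" using z connected_component_subset by blast
    have "comp Y z = {z}" using lemD[OF zY lemC(1)[OF zY zL]] .
    moreover have "comp Y z = comp Y y" using z by (rule connected_component_eq)
    moreover have "y \<in> comp Y y" using yL L_Y by auto
    ultimately show False using yL zL by auto
  qed
qed

lemma fY: "f ` Y \<subseteq> Y"
proof -
  have "f ` orbit f x \<subseteq> Y"
  proof
    fix z assume "z \<in> f ` orbit f x"
    then obtain n where "z = f ((f ^^ n) x)" unfolding orbit_def by blast
    then have "z = (f ^^ Suc n) x" by simp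
    then show "z \<in> Y" using orb_Y[of "Suc n"] by simp
  qed
  moreover have "continuous_on (closure (orbit f x)) f"
    using continuous_on_subset[OF cf] Y_X Y_def by simp
  ultimately show ?thesis unfolding Y_def
    using image_closure_subset[of "orbit f x" f "closure (orbit f x)"] Y_def by simp
qed

lemma fnY: "a \<in> Y \<Longrightarrow> (f ^^ j) a \<in> Y"
  by (induction j) (use fY in auto)

lemma fcomp_sub:
  assumes "a \<in> Y" shows "f ` comp Y a \<subseteq> comp Y (f a)"
proof (rule connected_component_maximal)
  show "f a \<in> f ` comp Y a" using assms by simp
  have "continuous_on (comp Y a) f"
    using continuous_on_subset[OF cf] Y_X connected_component_subset[of Y a] by blast
  then show "connected (f ` comp Y a)"
    using connected_continuous_image connected_connected_component by blast
  show "f ` comp Y a \<subseteq> Y" using fY connected_component_subset[of Y a] by blast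
qed

lemma fn_comp_sub: "a \<in> Y \<Longrightarrow> (f ^^ j) ` comp Y a \<subseteq> comp Y ((f ^^ j) a)"
proof (induction j)
  case 0 then show ?case by simp
next
  case (Suc j)
  have "(f ^^ Suc j) ` comp Y a = f ` ((f ^^ j) ` comp Y a)" by (simp add: image_comp)
  also have "\<dots> \<subseteq> f ` comp Y ((f ^^ j) a)" using Suc by blast
  also have "\<dots> \<subseteq> comp Y ((f ^^ Suc j) a)" using fcomp_sub[OF fnY[OF Suc.prems]] by simp
  finally show ?case .
qed

lemma comp_img:
  assumes yY: "y \<in> Y" shows "f ` comp Y y = comp Y (f y)"
proof
  show "f ` comp Y y \<subseteq> comp Y (f y)" using fcomp_sub[OF yY] .
  have fyY: "f y \<in> Y" using fY yY by blast
  have yC: "y \<in> comp Y y" using yY by simp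
  show "comp Y (f y) \<subseteq> f ` comp Y y"
  proof (cases "y \<in> L")
    case False
    then obtain n where n: "y = (f ^^ n) x" using lemC(2)[OF yY] unfolding orbit_def by blast
    then have "f y = (f ^^ Suc n) x" by simp
    then have "comp Y (f y) = {f y}" using comp_orb[of "Suc n"] by simp
    then show ?thesis using yC by auto
  next
    case yL: True
    then obtain m where m: "m \<ge> 1" "(f ^^ m) y = y"
      using tp unfolding totally_periodic_def by blast
    show ?thesis
    proof (cases "f y \<in> L")
      case False
      then have "comp Y (f y) = {f y}" using lemD[OF fyY lemC(1)[OF fyY]] by simp
      then show ?thesis using yC by auto
    next
      case True
      show ?thesis
      proof
        fix z assume z: "z \<in> comp Y (f y)"
        then have "z \<in> L" using part2[OF True] by blast
        then obtain k where k: "k \<ge> 1" "(f ^^ k) z = z"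
          using tp unfolding totally_periodic_def by blast
        define N where "N = k * m"
        have N1: "N = Suc (N - 1)" using k m unfolding N_def
          by (metis One_nat_def Suc_pred mult_eq_0_iff not_one_le_zero zero_less_iff_neq_zero)
        have zN: "(f ^^ N) z = z" unfolding N_def using per_mult[OF k(2)] .
        have yN: "(f ^^ N) y = y" unfolding N_def using per_mult[OF m(2), of k] by (simp add: mult.commute)
        have "(f ^^ (N - 1)) z \<in> comp Y ((f ^^ (N - 1)) (f y))"
          using fn_comp_sub[OF fyY, of "N - 1"] z by blast
        also have "(f ^^ (N - 1)) (f y) = (f ^^ N) y"
          by (subst (2) N1) (simp only: funpow_Suc_right o_apply)
        finally have w: "(f ^^ (N - 1)) z \<in> comp Y y" using yN by simp
        have "z = f ((f ^^ (N - 1)) z)"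
          using zN by (subst (asm) N1) simp
        then show "z \<in> f ` comp Y y" using w by blast
      qed
    qed
  qed
qed

lemma compn_img: "y \<in> Y \<Longrightarrow> (f ^^ n) ` comp Y y = comp Y ((f ^^ n) y)"
proof (induction n)
  case 0 then show ?case by simp
next
  case (Suc n)
  have "(f ^^ Suc n) ` comp Y y = f ` ((f ^^ n) ` comp Y y)" by (simp add: image_comp)
  also have "\<dots> = comp Y ((f ^^ Suc n) y)" using Suc comp_img[OF fnY[OF Suc.prems]] by simp
  finally show ?case .
qed

lemma ind: assumes "a \<in> Y" shows "induced_map Y f (comp Y a) = comp Y (f a)"
proof -
  define w where "w = (SOME w. w \<in> comp Y a)"
  have w: "w \<in> comp Y a" unfolding w_def
    using assms someI[of "\<lambda>w. w \<in> comp Y a" a] by simp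
  have wY: "w \<in> Y" using w connected_component_subset by blast
  have "comp Y w = comp Y a" using w by (rule connected_component_eq)
  then have "comp Y (f w) = comp Y (f a)" using comp_img[OF wY] comp_img[OF assms] by simp
  then show ?thesis unfolding induced_map_def w_def[symmetric] .
qed

lemma indn: "a \<in> Y \<Longrightarrow> (induced_map Y f ^^ n) (comp Y a) = comp Y ((f ^^ n) a)"
proof (induction n)
  case 0 then show ?case by simp
next
  case (Suc n)
  have "(induced_map Y f ^^ Suc n) (comp Y a) = induced_map Y f (comp Y ((f ^^ n) a))"
    using Suc by simp
  also have "\<dots> = comp Y ((f ^^ Suc n) a)" using ind[OF fnY[OF Suc.prems]] by simp
  finally show ?case .
qed


lemma part5:
  assumes inf: "infinite L"
  shows "comp Y ` L = omega_limit (quotient_top Y (comp Y)) (induced_map Y f) (comp Y x)"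
proof
  have xY: "x \<in> Y" using orb_Y[of 0] by simp
  show "comp Y ` L \<subseteq> omega_limit (quotient_top Y (comp Y)) (induced_map Y f) (comp Y x)"
  proof
    fix Q assume "Q \<in> comp Y ` L"
    then obtain y where y: "y \<in> L" "Q = comp Y y" by blast
    then obtain r where r: "filterlim r at_top sequentially" "(\<lambda>i. (f ^^ r i) x) \<longlonglongrightarrow> y"
      using L_iff by blast
    have "limitin (top_of_set Y) (\<lambda>i. (f ^^ r i) x) y sequentially"
      using r y L_Y orb_Y by (auto simp: limitin_subtopology limitin_canonical_iff)
    then have "limitin (quotient_top Y (comp Y)) (comp Y \<circ> (\<lambda>i. (f ^^ r i) x)) (comp Y y) sequentially"
      by (rule continuous_map_limit[OF qcont])
    moreover have "(comp Y \<circ> (\<lambda>i. (f ^^ r i) x)) = (\<lambda>i. (induced_map Y f ^^ r i) (comp Y x))"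
      using indn[OF xY] by (simp add: fun_eq_iff)
    ultimately show "Q \<in> omega_limit (quotient_top Y (comp Y)) (induced_map Y f) (comp Y x)"
      unfolding omega_limit_def using r(1) y by auto
  qed
  show "omega_limit (quotient_top Y (comp Y)) (induced_map Y f) (comp Y x) \<subseteq> comp Y ` L"
  proof
    fix Q assume "Q \<in> omega_limit (quotient_top Y (comp Y)) (induced_map Y f) (comp Y x)"
    then obtain r where r: "filterlim r at_top sequentially"
      "limitin (quotient_top Y (comp Y)) (\<lambda>i. (induced_map Y f ^^ r i) (comp Y x)) Q sequentially"
      unfolding omega_limit_def by blast
    have lim: "limitin (quotient_top Y (comp Y)) (\<lambda>i. comp Y ((f ^^ r i) x)) Q sequentially"
      using r(2) indn[OF xY] by simp
    then have "Q \<in> comp Y ` Y" using qtop limitin_topspace by metis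
    then obtain q where q: "q \<in> Y" "Q = comp Y q" by blast
    show "Q \<in> comp Y ` L"
    proof (cases "q \<in> L")
      case True then show ?thesis using q by blast
    next
      case False
      then obtain n where n: "q = (f ^^ n) x" using lemC(2)[OF q(1)] unfolding orbit_def by blast
      have "openin (quotient_top Y (comp Y)) {Q}"
        using qiso[OF orb_Y iso_orb comp_orb] q n by simp
      then have ev1: "\<forall>\<^sub>F i in sequentially. comp Y ((f ^^ r i) x) \<in> {Q}"
        using lim unfolding limitin_def by blast
      have ev2: "\<forall>\<^sub>F i in sequentially. Suc n \<le> r i"
        using r(1) unfolding filterlim_at_top by blast
      obtain i where i: "comp Y ((f ^^ r i) x) = Q" "Suc n \<le> r i"
        using eventually_happens'[OF _ eventually_conj[OF ev1 ev2]] by auto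
      then have "{(f ^^ r i) x} = {(f ^^ n) x}" using comp_orb q n by simp
      then have "(f ^^ n) x = (f ^^ r i) x" by simp
      then have "finite Y" using orbit_fin[of n "r i"] i Y_fin by simp
      then have "finite L" using L_Y finite_subset by blast
      then show ?thesis using inf by blast
    qed
  qed
qed

end

theorem lemma2p7:
  fixes X :: "'a::metric_space set" and f :: "'a \<Rightarrow> 'a" and x :: 'a
    and L Y :: "'a set"
  assumes "compact X" and "continuous_on X f" and "f ` X \<subseteq> X" and "x \<in> X"
    and L_def: "L = omega_limit (top_of_set X) f x"
    and "totally_periodic f L"
    and Y_def: "Y = closure (orbit f x)"
  shows
    "(\<forall>n. comp Y ((f ^^ n) x) = {(f ^^ n) x} \<and>
              openin (quotient_top Y (comp Y)) {comp Y ((f ^^ n) x)}) \<and>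
     (\<forall>y\<in>L. comp Y y \<subseteq> L) \<and>
     (\<forall>y\<in>Y. f ` comp Y y = comp Y (f y) \<and> (\<forall>n. (f ^^ n) ` comp Y y = comp Y ((f ^^ n) y))) \<and>
     (\<forall>z\<in>L. \<exists>m\<ge>1. (induced_map Y f ^^ m) (comp Y z) = comp Y z) \<and>
     (infinite L \<longrightarrow> comp Y ` L = omega_limit (quotient_top Y (comp Y)) (induced_map Y f) (comp Y x))"
proof -
  interpret d: dsetting X f x L Y
    using assms by unfold_locales auto
  have p1: "\<forall>n. comp Y ((f ^^ n) x) = {(f ^^ n) x} \<and>
              openin (quotient_top Y (comp Y)) {comp Y ((f ^^ n) x)}"
    using d.comp_orb d.qiso[OF d.orb_Y d.iso_orb d.comp_orb] by simp
  have p4: "\<forall>z\<in>L. \<exists>m\<ge>1. (induced_map Y f ^^ m) (comp Y z) = comp Y z"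
  proof
    fix z assume z: "z \<in> L"
    then obtain m where "m \<ge> 1" "(f ^^ m) z = z"
      using assms(6) unfolding totally_periodic_def by blast
    then show "\<exists>m\<ge>1. (induced_map Y f ^^ m) (comp Y z) = comp Y z"
      using d.indn[of z m] z d.L_Y by auto
  qed
  have p2: "\<forall>y\<in>L. comp Y y \<subseteq> L" using d.part2 by blast
  have p3: "\<forall>y\<in>Y. f ` comp Y y = comp Y (f y) \<and> (\<forall>n. (f ^^ n) ` comp Y y = comp Y ((f ^^ n) y))"
    using d.comp_img d.compn_img by blast
  have p5: "infinite L \<longrightarrow> comp Y ` L = omega_limit (quotient_top Y (comp Y)) (induced_map Y f) (comp Y x)"
    using d.part5 by blast
  show ?thesis using p1 p2 p3 p4 p5 by (intro conjI)
qed

end
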